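(* Let $\mathcal Y\subset\mathbb R^d$ be finite with no element a strict convex combination of others, $Y$ the matrix with columns $y\in\mathcal Y$, $\mathcal C=\operatorname{conv}(\mathcal Y)$, and $V$ the direction of $\operatorname{aff}(\mathcal Y)$. Let $\Omega_\Delta$ be a proper l.s.c. convex function on $\mathbb R^{\mathcal Y}$ with domain $\Delta^{\mathcal Y}$ whose restriction to the affine hull $H_\Delta$ of $\Delta^{\mathcal Y}$ is Legendre-type (w.r.t. the metric of $H_\Delta$). Define $\Omega_{\mathcal C}(\mu):=\min\{\Omega_\Delta(q):q\in\Delta^{\mathcal Y},\ Yq=\mu\}$ for $\mu\in\mathcal C$ (and $+\infty$ otherwise). For $\theta\in\mathbb R^d$ and $q\in\Delta^{\mathcal Y}$ put $s_\theta=Y^\top\theta$, $\mu_q=Yq$. Then: (1) $\langle s_\theta|q\rangle=\langle\theta|\mu_q\rangle$. (2) $\Omega_{\mathcal C}^*(\theta)=\Omega_\Delta^*(Y^\top\theta)$; hence $\operatorname{dom}(\Omega^*_{\mathcal C})=\mathbb R^d$, $\Omega^*_{\mathcal C}$ is differentiable on $\mathbb R^d$ and affine on $V^\perp$. (3) $\Omega_\Delta(q)\ge\Omega_{\mathcal C}(\mu_q)$ and $\mathcal L_{\Omega_\Delta}(s_\theta;q)\ge\mathcal L_{\Omega_{\mathcal C}}(\theta;\mu_q)$, both with equality if and only if $q$ minimizes $\Omega_\Delta$ over $\{q'\in\Delta^{\mathcal Y}:Yq'=\mu_q\}$. (4) $\inf_{\theta'}\mathcal L_{\Omega_\Delta}(s_{\theta'};q)\ge\inf_{\theta'}\mathcal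 L_{\Omega_{\mathcal C}}(\theta';\mu_q)$, with equality if and only if $q$ minimizes $\Omega_\Delta$ over $\{q'\in\Delta^{\mathcal Y}:Yq'=\mu_q\}$. (5) $\nabla_\theta\mathcal L_{\Omega_\Delta}(s_\theta;q)=\nabla_\theta\mathcal L_{\Omega_{\mathcal C}}(\theta;\mu_q)=Y(\nabla\Omega_\Delta^*(s_\theta)-q)=\nabla\Omega^*_{\mathcal C}(\theta)-\mu_q$.
   Context: $\Delta^{\mathcal Y}$ is the probability simplex in $\mathbb R^{\mathcal Y}$. Legendre-type: strictly convex on the interior of its domain and essentially smooth (nonempty interior, differentiable there, gradient norm blowing up at the boundary of the domain). ${}^*$ denotes Fenchel conjugation and for a convex $\Omega$, $\mathcal L_\Omega(\theta;\mu)=\Omega(\mu)+\Omega^*(\theta)-\langle\theta|\mu\rangle$ is its Fenchel–Young loss. *)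

theory Defs
  imports "HOL-Analysis.Analysis" "HOL-Library.Liminf_Limsup"
begin

definition prob_simplex :: "(real ^ 'y::finite) set" where
  "prob_simplex = {q. (\<forall>i. 0 \<le> q $ i) \<and> (\<Sum>i\<in>UNIV. q $ i) = 1}"

definition fconj :: "('v::real_inner \<Rightarrow> ereal) \<Rightarrow> 'v \<Rightarrow> ereal" where
  "fconj f \<theta> = (SUP x. ereal (\<theta> \<bullet> x) - f x)"

definition fy_loss :: "('v::real_inner \<Rightarrow> ereal) \<Rightarrow> 'v \<Rightarrow> 'v \<Rightarrow> ereal" where
  "fy_loss \<Omega> \<theta> \<mu> = \<Omega> \<mu> + fconj \<Omega> \<theta> - ereal (\<theta> \<bullet> \<mu>)"

definition edom :: "('v \<Rightarrow> ereal) \<Rightarrow> 'v set" where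
  "edom f = {x. f x < \<infinity>}"

definition proper_fun :: "('v \<Rightarrow> ereal) \<Rightarrow> bool" where
  "proper_fun f \<longleftrightarrow> (\<forall>x. f x \<noteq> -\<infinity>) \<and> (\<exists>x. f x \<noteq> \<infinity>)"

definition lsc_fun :: "('v::topological_space \<Rightarrow> ereal) \<Rightarrow> bool" where
  "lsc_fun f \<longleftrightarrow> (\<forall>x. f x \<le> Liminf (at x) f)"

definition convex_fun :: "('v::real_vector \<Rightarrow> ereal) \<Rightarrow> bool" where
  "convex_fun f \<longleftrightarrow> (\<forall>x y t. 0 < t \<and> t < 1 \<longrightarrow>
      f (t *\<^sub>R x + (1 - t) *\<^sub>R y) \<le> ereal t * f x + ereal (1 - t) * f y)"

definition int_within :: "'v::metric_space set \<Rightarrow> 'v set \<Rightarrow> 'v set" where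
  "int_within H S = {x \<in> S. \<exists>e>0. ball x e \<inter> H \<subseteq> S}"

definition dnorm_on :: "'v::real_normed_vector set \<Rightarrow> ('v \<Rightarrow> real) \<Rightarrow> real" where
  "dnorm_on V D = Sup {\<bar>D w\<bar> | w. w \<in> V \<and> norm w \<le> 1}"

text \<open>Restriction of f to the affine set H is of Legendre type w.r.t. the metric of H:
  strictly convex on the (H-relative) interior of its domain, and essentially smooth
  (that interior is nonempty, f is differentiable along H there, and the norm of the
  gradient along H blows up at the boundary of that interior).\<close>
definition legendre_on :: "('v::real_normed_vector) set \<Rightarrow> ('v \<Rightarrow> ereal) \<Rightarrow> bool" where
  "legendre_on H f \<longleftrightarrow>
    (let D = edom f \<inter> H; I = int_within H D; V = {a - b | a b. a \<in> H \<and> b \<in> H} in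
      (\<forall>x\<in>I. \<forall>y\<in>I. \<forall>t. x \<noteq> y \<and> 0 < t \<and> t < 1 \<longrightarrow>
          f (t *\<^sub>R x + (1 - t) *\<^sub>R y) < ereal t * f x + ereal (1 - t) * f y)
      \<and> I \<noteq> {}
      \<and> (\<forall>x\<in>I. \<exists>D'. ((\<lambda>z. real_of_ereal (f z)) has_derivative D') (at x within H))
      \<and> (\<forall>(xs :: nat \<Rightarrow> 'v) Ds b.
           (\<forall>k. xs k \<in> I \<and> ((\<lambda>z. real_of_ereal (f z)) has_derivative Ds k) (at (xs k) within H))
           \<and> xs \<longlonglongrightarrow> b \<and> b \<in> closure I - I
           \<longrightarrow> filterlim (\<lambda>k. dnorm_on V (Ds k)) at_top sequentially))"

text \<open>Omega_C(mu) = min { Omega_Delta(q) : q in prob_simplex, Y q = mu } for mu in conv Y,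
  +infinity otherwise (the minimum is written as an infimum).\<close>
definition omega_C :: "real ^ 'y ^ 'd \<Rightarrow> (real ^ 'y::finite \<Rightarrow> ereal) \<Rightarrow> real ^ 'd::finite \<Rightarrow> ereal" where
  "omega_C Y \<Omega> \<mu> = (if \<mu> \<in> convex hull (columns Y)
      then (INF q \<in> {q \<in> prob_simplex. Y *v q = \<mu>}. \<Omega> q) else \<infinity>)"

end

theory Submission imports Defs begin

lemma simplex_closed: "closed (prob_simplex :: (real^'y::finite) set)"
proof -
  have "prob_simplex = {q::real^'y. \<forall>i. 0 \<le> q $ i} \<inter> {q. (\<Sum>i\<in>UNIV. q $ i) = 1}"
    unfolding prob_simplex_def by auto
  also have "closed \<dots>"
    by (intro closed_Int closed_Collect_all closed_Collect_le closed_Collect_eq continuous_intros)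
  finally show ?thesis .
qed

lemma simplex_norm: assumes "q \<in> prob_simplex" shows "norm q \<le> 1"
proof -
  have "norm q \<le> (\<Sum>i\<in>UNIV. \<bar>q$i\<bar>)" by (rule norm_le_l1_cart)
  also have "\<dots> = (\<Sum>i\<in>UNIV. q$i)" using assms unfolding prob_simplex_def by auto
  finally show ?thesis using assms unfolding prob_simplex_def by auto
qed

lemma simplex_compact: "compact (prob_simplex :: (real^'y::finite) set)"
  using simplex_closed simplex_norm
  by (metis bounded_iff compact_eq_bounded_closed)

lemma simplex_convex: "convex (prob_simplex :: (real^'y::finite) set)"
  unfolding convex_def prob_simplex_def
  by (auto simp: sum.distrib sum_distrib_left[symmetric])

lemma simplex_nonempty: "(axis i 1 :: real^'y::finite) \<in> prob_simplex"
  unfolding prob_simplex_def by (auto simp: axis_def)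

lemma lsc_min:
  fixes h :: "'a::metric_space \<Rightarrow> real"
  assumes "compact K" "K \<noteq> {}"
    and lsc: "\<And>x y. x \<in> K \<Longrightarrow> y < h x \<Longrightarrow> \<exists>d>0. \<forall>z\<in>K. dist z x < d \<longrightarrow> y < h z"
  shows "\<exists>x\<in>K. \<forall>z\<in>K. h x \<le> h z"
proof (rule ccontr)
  assume "\<not> ?thesis"
  then have "\<forall>x\<in>K. \<exists>z\<in>K. h z < h x" by (auto simp: not_le)
  then obtain zz where zz: "\<And>x. x \<in> K \<Longrightarrow> zz x \<in> K \<and> h (zz x) < h x" by metis
  have "\<forall>x\<in>K. \<exists>d>0. \<forall>z\<in>K. dist z x < d \<longrightarrow> h (zz x) < h z"
    using lsc zz by blast
  then obtain dd where dd: "\<And>x. x \<in> K \<Longrightarrow> dd x > 0 \<and> (\<forall>z\<in>K. dist z x < dd x \<longrightarrow> h (zz x) < h z)"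
    by metis
  have "K \<subseteq> (\<Union>x\<in>K. ball x (dd x))" using dd by force
  then obtain F where F: "F \<subseteq> K" "finite F" "K \<subseteq> (\<Union>x\<in>F. ball x (dd x))"
    using compactE_image[OF assms(1), of K "\<lambda>x. ball x (dd x)"] by auto
  have "F \<noteq> {}" using F assms(2) by auto
  define m where "m = Min ((\<lambda>x. h (zz x)) ` F)"
  obtain x0 where x0: "x0 \<in> F" "m = h (zz x0)"
  proof -
    have "m \<in> (\<lambda>x. h (zz x)) ` F" unfolding m_def using F \<open>F \<noteq> {}\<close> by (intro Min_in) auto
    then show ?thesis using that by auto
  qed
  have "zz x0 \<in> K" using zz x0 F by auto
  then obtain x1 where x1: "x1 \<in> F" "zz x0 \<in> ball x1 (dd x1)" using F by auto
  then have "h (zz x1) < h (zz x0)" using dd[of x1] F \<open>zz x0 \<in> K\<close> by (auto simp: dist_commute)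
  moreover have "m \<le> h (zz x1)" unfolding m_def using F x1 by auto
  ultimately show False using x0 by auto
qed

locale omega_setting =
  fixes \<Omega> :: "real^'y::finite \<Rightarrow> ereal"
  assumes proper: "proper_fun \<Omega>" and lsc: "lsc_fun \<Omega>" and cvx: "convex_fun \<Omega>"
    and dom: "edom \<Omega> = prob_simplex" and leg: "legendre_on (affine hull prob_simplex) \<Omega>"
begin

abbreviation SS where "SS \<equiv> (prob_simplex :: (real^'y) set)"
abbreviation HH where "HH \<equiv> affine hull SS"
abbreviation II where "II \<equiv> int_within HH SS"
abbreviation ff where "ff \<equiv> (\<lambda>z. real_of_ereal (\<Omega> z))"
abbreviation VV where "VV \<equiv> {a - b |a b. a \<in> HH \<and> b \<in> HH}"

lemma Om_out: "x \<notin> SS \<Longrightarrow> \<Omega> x = \<infinity>"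
  using dom unfolding edom_def by auto

lemma Om_in: "x \<in> SS \<Longrightarrow> \<Omega> x = ereal (ff x)"
proof -
  assume x: "x \<in> SS"
  have "\<Omega> x < \<infinity>" using dom x unfolding edom_def by auto
  moreover have "\<Omega> x \<noteq> -\<infinity>" using proper unfolding proper_fun_def by auto
  ultimately show ?thesis by (cases "\<Omega> x") auto
qed

lemma Om_ex: "x \<in> SS \<Longrightarrow> \<exists>a. \<Omega> x = ereal a"
  using Om_in by blast

lemma S_H: "SS \<subseteq> HH" by (rule hull_subset)

lemma legs:
  shows "\<And>x y t. x\<in>II \<Longrightarrow> y\<in>II \<Longrightarrow> x \<noteq> y \<Longrightarrow> 0 < t \<Longrightarrow> t < 1 \<Longrightarrow>
          \<Omega> (t *\<^sub>R x + (1 - t) *\<^sub>R y) < ereal t * \<Omega> x + ereal (1 - t) * \<Omega> y"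
    and "II \<noteq> {}"
    and "\<And>x. x\<in>II \<Longrightarrow> \<exists>D'. (ff has_derivative D') (at x within HH)"
    and "\<And>(xs :: nat \<Rightarrow> real^'y) Ds b.
           (\<forall>k. xs k \<in> II \<and> (ff has_derivative Ds k) (at (xs k) within HH))
           \<Longrightarrow> xs \<longlonglongrightarrow> b \<Longrightarrow> b \<in> closure II - II
           \<Longrightarrow> filterlim (\<lambda>k. dnorm_on VV (Ds k)) at_top sequentially"
proof -
  have e: "edom \<Omega> \<inter> HH = SS" using dom S_H by auto
  note L = leg[unfolded legendre_on_def Let_def e]
  show "\<And>x y t. x\<in>II \<Longrightarrow> y\<in>II \<Longrightarrow> x \<noteq> y \<Longrightarrow> 0 < t \<Longrightarrow> t < 1 \<Longrightarrow>
          \<Omega> (t *\<^sub>R x + (1 - t) *\<^sub>R y) < ereal t * \<Omega> x + ereal (1 - t) * \<Omega> y"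
    using L by blast
  show "II \<noteq> {}" using L by blast
  show "\<And>x. x\<in>II \<Longrightarrow> \<exists>D'. (ff has_derivative D') (at x within HH)" using L by blast
  show "\<And>(xs :: nat \<Rightarrow> real^'y) Ds b.
           (\<forall>k. xs k \<in> II \<and> (ff has_derivative Ds k) (at (xs k) within HH))
           \<Longrightarrow> xs \<longlonglongrightarrow> b \<Longrightarrow> b \<in> closure II - II
           \<Longrightarrow> filterlim (\<lambda>k. dnorm_on VV (Ds k)) at_top sequentially"
    using L by blast
qed

lemma I_S: "II \<subseteq> SS" unfolding int_within_def by auto

lemma strict_ff:
  assumes "x\<in>II" "y\<in>II" "x \<noteq> y" "0 < t" "t < 1"
  shows "ff (t *\<^sub>R x + (1 - t) *\<^sub>R y) < t * ff x + (1 - t) * ff y"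
proof -
  have m: "t *\<^sub>R x + (1 - t) *\<^sub>R y \<in> SS"
    using convexD[OF simplex_convex, of x y t "1-t"] assms I_S by auto
  obtain a b c where "\<Omega> (t *\<^sub>R x + (1 - t) *\<^sub>R y) = ereal a" "\<Omega> x = ereal b" "\<Omega> y = ereal c"
    using Om_ex[OF m] Om_ex[of x] Om_ex[of y] assms I_S by blast
  then show ?thesis using legs(1)[OF assms] by auto
qed

lemma convex_ff: "convex_on SS ff"
proof (rule convex_onI[OF _ simplex_convex])
  fix t :: real and x y assume a: "0 < t" "t < 1" "x \<in> SS" "y \<in> SS"
  have m: "(1 - t) *\<^sub>R x + t *\<^sub>R y \<in> SS"
    using convexD[OF simplex_convex, of x y "1-t" t] a by auto
  have "\<Omega> ((1 - t) *\<^sub>R x + (1 - (1 - t)) *\<^sub>R y) \<le> ereal (1 - t) * \<Omega> x + ereal (1 - (1 - t)) * \<Omega> y"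
    using cvx a unfolding convex_fun_def by (intro cvx[unfolded convex_fun_def, rule_format]) auto
  moreover obtain a1 b c where "\<Omega> ((1 - t) *\<^sub>R x + t *\<^sub>R y) = ereal a1" "\<Omega> x = ereal b" "\<Omega> y = ereal c"
    using Om_ex[OF m] Om_ex[of x] Om_ex[of y] a by blast
  ultimately show "ff ((1 - t) *\<^sub>R x + t *\<^sub>R y) \<le> (1 - t) * ff x + t * ff y"
    by auto
qed

lemma lsc_ff:
  assumes "x \<in> SS" "y < ff x"
  shows "\<exists>d>0. \<forall>z\<in>SS. dist z x < d \<longrightarrow> y < ff z"
proof -
  have "ereal y < \<Omega> x" using assms Om_ex[OF assms(1)] by auto
  also have "\<Omega> x \<le> Liminf (at x) \<Omega>" using lsc unfolding lsc_fun_def by auto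
  finally have "ereal y < Liminf (at x) \<Omega>" .
  from less_LiminfD[OF this] obtain d where d: "d > 0" "\<forall>z. z \<noteq> x \<and> dist z x < d \<longrightarrow> ereal y < \<Omega> z"
    unfolding eventually_at by auto
  show ?thesis
  proof (intro exI[of _ d] conjI ballI impI d(1))
    fix z assume "z \<in> SS" "dist z x < d"
    then show "y < ff z" using d(2)[rule_format, of z] assms Om_ex[of z] by (cases "z = x") auto
  qed
qed

lemma max_exists: "\<exists>q\<in>SS. \<forall>z\<in>SS. s \<bullet> z - ff z \<le> s \<bullet> q - ff q"
proof -
  have "\<exists>x\<in>SS. \<forall>z\<in>SS. (\<lambda>q. ff q - s \<bullet> q) x \<le> (\<lambda>q. ff q - s \<bullet> q) z"
  proof (rule lsc_min[OF simplex_compact])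
    show "SS \<noteq> {}" using simplex_nonempty by auto
    fix x y assume x: "x \<in> SS" and y: "y < ff x - s \<bullet> x"
    define e where "e = ff x - s \<bullet> x - y"
    have e: "e > 0" using y e_def by auto
    obtain d1 where d1: "d1 > 0" "\<forall>z\<in>SS. dist z x < d1 \<longrightarrow> ff x - e/2 < ff z"
      using lsc_ff[OF x, of "ff x - e/2"] e by auto
    define d where "d = min d1 (e / (2 * (norm s + 1)))"
    have "e / (2 * (norm s + 1)) > 0" using e by (intro divide_pos_pos) (auto simp: add_nonneg_pos)
    then have d: "d > 0" using d1 by (auto simp: d_def)
    show "\<exists>d>0. \<forall>z\<in>SS. dist z x < d \<longrightarrow> y < ff z - s \<bullet> z"
    proof (intro exI[of _ d] conjI ballI impI d)
      fix z assume z: "z \<in> SS" "dist z x < d"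
      have "\<bar>s \<bullet> z - s \<bullet> x\<bar> = \<bar>s \<bullet> (z - x)\<bar>" by (simp add: inner_diff_right)
      also have "\<dots> \<le> norm s * norm (z - x)" by (rule Cauchy_Schwarz_ineq2)
      also have "\<dots> \<le> (norm s + 1) * d" using z by (intro mult_mono) (auto simp: dist_norm)
      also have "\<dots> \<le> e / 2"
      proof -
        have "(norm s + 1) * d \<le> (norm s + 1) * (e / (2 * (norm s + 1)))"
          by (intro mult_left_mono) (auto simp: d_def)
        also have "\<dots> = e / 2"
        proof -
          have "norm s + 1 > 0" by (simp add: add_nonneg_pos)
          then show ?thesis by (simp add: field_simps)
        qed
        finally show ?thesis .
      qed
      finally have "\<bar>s \<bullet> z - s \<bullet> x\<bar> \<le> e / 2" .
      then have "s \<bullet> z - s \<bullet> x \<le> e / 2" by (rule abs_le_D1)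
      moreover have "ff x - e/2 < ff z" using d1 z d_def by auto
      ultimately show "y < ff z - s \<bullet> z" unfolding e_def by (simp add: field_simps)
    qed
  qed
  then obtain q where "q \<in> SS" "\<forall>z\<in>SS. ff q - s \<bullet> q \<le> ff z - s \<bullet> z" by auto
  then show ?thesis by (intro bexI[of _ q]) (auto simp: algebra_simps)
qed

lemma fconj_max:
  assumes q: "q \<in> SS" and mx: "\<forall>z\<in>SS. s \<bullet> z - ff z \<le> s \<bullet> q - ff q"
  shows "fconj \<Omega> s = ereal (s \<bullet> q - ff q)"
  unfolding fconj_def
proof (rule antisym)
  show "(SUP x. ereal (s \<bullet> x) - \<Omega> x) \<le> ereal (s \<bullet> q - ff q)"
  proof (rule SUP_least)
    fix x show "ereal (s \<bullet> x) - \<Omega> x \<le> ereal (s \<bullet> q - ff q)"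
    proof (cases "x \<in> SS")
      case True
      then obtain a where a: "\<Omega> x = ereal a" using Om_ex by blast
      then show ?thesis using mx True by force
    qed (simp add: Om_out)
  qed
  obtain a where a: "\<Omega> q = ereal a" using Om_ex q by blast
  show "ereal (s \<bullet> q - ff q) \<le> (SUP x. ereal (s \<bullet> x) - \<Omega> x)"
    by (rule SUP_upper2[of q]) (auto simp: a)
qed

definition GG where "GG s = real_of_ereal (fconj \<Omega> s)"

lemma GG_max:
  assumes "q \<in> SS" "\<forall>z\<in>SS. s \<bullet> z - ff z \<le> s \<bullet> q - ff q"
  shows "GG s = s \<bullet> q - ff q"
  using fconj_max[OF assms] unfolding GG_def by simp

lemma fconj_fin: "fconj \<Omega> s = ereal (GG s)"
  using max_exists[of s] fconj_max GG_max by metis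

lemma GG_ge: "z \<in> SS \<Longrightarrow> s \<bullet> z - ff z \<le> GG s"
  using max_exists[of s] GG_max by metis

lemma grad_ineq:
  assumes x: "x \<in> II" and D: "(ff has_derivative D) (at x within HH)" and z: "z \<in> SS"
  shows "ff x + D (z - x) \<le> ff z"
proof (rule ccontr)
  assume neg: "\<not> ?thesis"
  define \<eta> where "\<eta> = ff x + D (z - x) - ff z"
  have eta: "\<eta> > 0" using neg unfolding \<eta>_def by auto
  have bl: "bounded_linear D" and lim: "\<forall>e>0. \<exists>d>0. \<forall>y\<in>HH. norm (y - x) < d \<longrightarrow>
      norm (ff y - ff x - D (y - x)) \<le> e * norm (y - x)"
    using D unfolding has_derivative_within_alt by auto
  have lD: "linear D" using bl by (rule bounded_linear.linear)
  have xS: "x \<in> SS" using x I_S by auto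
  have "z \<noteq> x"
  proof
    assume "z = x" then have "\<eta> = D 0" unfolding \<eta>_def by simp
    also have "D 0 = 0" using lD by (rule linear_0)
    finally show False using eta by simp
  qed
  define nz where "nz = norm (z - x)"
  have nz: "nz > 0" using \<open>z \<noteq> x\<close> unfolding nz_def by auto
  obtain d where d: "d > 0" "\<forall>y\<in>HH. norm (y - x) < d \<longrightarrow>
      norm (ff y - ff x - D (y - x)) \<le> (\<eta> / (2 * nz)) * norm (y - x)"
  proof -
    have "\<eta> / (2 * nz) > 0" using eta nz by simp
    then show ?thesis using lim that by blast
  qed
  define l where "l = min 1 (d / (2 * nz))"
  have dd: "d / (2 * nz) > 0" using d nz by simp
  have l: "l > 0" "l \<le> 1" using dd unfolding l_def by auto
  have "l * nz \<le> d / (2 * nz) * nz" unfolding l_def using nz by (intro mult_right_mono) auto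
  also have "\<dots> = d / 2" using nz by simp
  finally have l3: "l * nz \<le> d / 2" .
  define y where "y = (1 - l) *\<^sub>R x + l *\<^sub>R z"
  have yS: "y \<in> SS" unfolding y_def using convexD[OF simplex_convex xS z, of "1-l" l] l by auto
  have yx: "y - x = l *\<^sub>R (z - x)" unfolding y_def by (simp add: algebra_simps)
  have nyx: "norm (y - x) = l * nz" unfolding yx nz_def using l by simp
  have Dy: "D (y - x) = l * D (z - x)" unfolding yx using linear_scale[OF lD] by simp
  have cv: "ff y \<le> (1 - l) * ff x + l * ff z"
    unfolding y_def using convex_onD[OF convex_ff, of l x z] l xS z by (simp add: algebra_simps)
  have "norm (y - x) < d" using nyx l3 d by auto
  then have "norm (ff y - ff x - D (y - x)) \<le> (\<eta> / (2 * nz)) * norm (y - x)"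
    using d(2) yS S_H by blast
  then have "norm (ff y - ff x - D (y - x)) \<le> (\<eta> / (2 * nz)) * (l * nz)"
    unfolding nyx .
  also have "\<dots> = l * \<eta> / 2" using nz by (simp add: field_simps)
  finally have A: "\<bar>ff y - ff x - D (y - x)\<bar> \<le> l * \<eta> / 2" by simp
  have B: "ff y - ff x - D (y - x) \<le> - (l * \<eta>)"
    using cv Dy unfolding \<eta>_def by (simp add: algebra_simps)
  have "l * \<eta> > 0" using l eta by simp
  then show False using A B by (simp add: abs_le_iff)
qed

lemma seg_I:
  assumes x: "x \<in> II" and a: "a \<in> SS" and t: "0 < t" "t \<le> 1"
  shows "(1 - t) *\<^sub>R a + t *\<^sub>R x \<in> II"
proof -
  have xS: "x \<in> SS" using x I_S by auto
  obtain r where r: "r > 0" "ball x r \<inter> HH \<subseteq> SS" using x unfolding int_within_def by auto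
  define p where "p = (1 - t) *\<^sub>R a + t *\<^sub>R x"
  have pS: "p \<in> SS" unfolding p_def using convexD[OF simplex_convex a xS, of "1-t" t] t by auto
  have "ball p (t * r) \<inter> HH \<subseteq> SS"
  proof
    fix z assume z: "z \<in> ball p (t * r) \<inter> HH"
    define w where "w = (1 / t) *\<^sub>R z + (1 - 1 / t) *\<^sub>R a"
    have wH: "w \<in> HH" unfolding w_def
      by (rule mem_affine[OF affine_affine_hull]) (use z a S_H in auto)
    have "w - x = (1 / t) *\<^sub>R (z - p)" unfolding w_def p_def using t
      by (simp add: algebra_simps)
    then have "norm (w - x) = (1/t) * norm (z - p)" using t by simp
    also have "\<dots> < (1/t) * (t * r)" using z t
      by (intro mult_strict_left_mono) (auto simp: dist_norm norm_minus_commute)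
    also have "\<dots> = r" using t by simp
    finally have "w \<in> ball x r" by (simp add: dist_norm norm_minus_commute)
    then have wS: "w \<in> SS" using r wH by auto
    have "z = t *\<^sub>R w + (1 - t) *\<^sub>R a" unfolding w_def using t by (simp add: algebra_simps)
    then show "z \<in> SS" using convexD[OF simplex_convex wS a, of t "1-t"] t by auto
  qed
  moreover have "t * r > 0" using r t by simp
  ultimately show ?thesis unfolding int_within_def p_def[symmetric] using pS by blast
qed

lemma cont_I: "x \<in> II \<Longrightarrow> continuous (at x within HH) ff"
  using legs(3) has_derivative_continuous by blast

lemma cball_I:
  assumes r: "ball x r \<inter> HH \<subseteq> SS" and r': "0 < r'" "r' < r"
  shows "cball x r' \<inter> HH \<subseteq> II"
proof
  fix z assume z: "z \<in> cball x r' \<inter> HH"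
  have "ball z (r - r') \<inter> HH \<subseteq> ball x r \<inter> HH"
  proof
    fix y assume y: "y \<in> ball z (r - r') \<inter> HH"
    have "dist x y \<le> dist x z + dist z y" by (rule dist_triangle)
    also have "\<dots> < r' + (r - r')" using y z by (intro add_le_less_mono) auto
    finally show "y \<in> ball x r \<inter> HH" using y by auto
  qed
  then have "ball z (r - r') \<inter> HH \<subseteq> SS" using r by auto
  moreover have "z \<in> SS" using z r r' by auto
  moreover have "r - r' > 0" using r' by auto
  ultimately show "z \<in> II" unfolding int_within_def by blast
qed

lemma bounded_on_I:
  assumes "ball x r \<inter> HH \<subseteq> SS" "0 < r'" "r' < r"
  shows "\<exists>M. \<forall>z \<in> cball x r' \<inter> HH. ff z \<le> M"
proof -
  let ?K = "cball x r' \<inter> HH"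
  have K: "?K \<subseteq> II" by (rule cball_I[OF assms])
  have "compact ?K" by (intro compact_Int_closed) auto
  moreover have "continuous_on ?K ff"
    unfolding continuous_on_eq_continuous_within
  proof
    fix z assume z: "z \<in> ?K"
    show "continuous (at z within ?K) ff"
      using continuous_within_subset[OF cont_I[of z], of ?K] K z by blast
  qed
  ultimately have "compact (ff ` ?K)" using compact_continuous_image by blast
  then obtain B where "\<forall>y\<in>ff ` ?K. norm y \<le> B" using compact_imp_bounded bounded_iff by metis
  have "ff z \<le> B" if z: "z \<in> ?K" for z
  proof -
    have "norm (ff z) \<le> B" using \<open>\<forall>y\<in>ff ` ?K. norm y \<le> B\<close> z by blast
    then show ?thesis unfolding real_norm_def by (rule abs_le_D1)
  qed
  then show ?thesis by blast
qed

lemma max_in_I: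
  assumes aS: "a \<in> SS" and mx: "\<forall>z\<in>SS. s \<bullet> z - ff z \<le> s \<bullet> a - ff a"
  shows "a \<in> II"
proof (rule ccontr)
  assume aI: "a \<notin> II"
  obtain x where x: "x \<in> II" using legs(2) by auto
  obtain r where r: "r > 0" "ball x r \<inter> HH \<subseteq> SS" using x unfolding int_within_def by auto
  define r' where "r' = r / 2"
  have r': "0 < r'" "r' < r" using r unfolding r'_def by auto
  obtain M where M: "\<forall>z \<in> cball x r' \<inter> HH. ff z \<le> M" using bounded_on_I[OF r(2) r'] by auto
  have K: "cball x r' \<inter> HH \<subseteq> II" by (rule cball_I[OF r(2) r'])
  define c where "c = s \<bullet> (x - a)"
  define t where "t = (\<lambda>k::nat. inverse (real (Suc k)))"
  have t: "\<And>k. 0 < t k \<and> t k \<le> 1" unfolding t_def by (auto simp: field_simps)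
  define xs where "xs = (\<lambda>k. (1 - t k) *\<^sub>R a + t k *\<^sub>R x)"
  have xsI: "\<And>k. xs k \<in> II" unfolding xs_def using seg_I[OF x aS] t by auto
  have "\<forall>k. \<exists>D. (ff has_derivative D) (at (xs k) within HH)" using legs(3) xsI by blast
  then obtain Ds where Ds: "\<And>k. (ff has_derivative Ds k) (at (xs k) within HH)" by metis
  have xs_eq: "xs = (\<lambda>k. a + t k *\<^sub>R (x - a))" unfolding xs_def by (auto simp: algebra_simps)
  have "(\<lambda>k. a + t k *\<^sub>R (x - a)) \<longlonglongrightarrow> a + 0 *\<^sub>R (x - a)"
    unfolding t_def by (intro tendsto_intros LIMSEQ_inverse_real_of_nat)
  then have lim: "xs \<longlonglongrightarrow> a" unfolding xs_eq by simp
  have "a \<in> closure II" unfolding closure_sequential using xsI lim by blast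
  then have "filterlim (\<lambda>k. dnorm_on VV (Ds k)) at_top sequentially"
    using legs(4)[of xs Ds a] xsI Ds lim aI by blast
  define B where "B = (M - ff a - c) / r'"
  have bnd: "dnorm_on VV (Ds k) \<le> B" for k
  proof -
    let ?t = "t k" and ?y = "xs k" and ?D = "Ds k"
    have lD: "linear ?D" using Ds[of k] has_derivative_linear by blast
    have yS: "?y \<in> SS" using xsI I_S by auto
    have g1: "ff ?y + ?D (a - ?y) \<le> ff a" by (rule grad_ineq[OF xsI Ds aS])
    have ay: "a - ?y = (- ?t) *\<^sub>R (x - a)" unfolding xs_def by (simp add: algebra_simps)
    have Day: "?D (a - ?y) = - ?t * ?D (x - a)" unfolding ay linear_scale[OF lD] by simp
    have m1: "s \<bullet> ?y - ff ?y \<le> s \<bullet> a - ff a" using mx yS by auto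
    have "s \<bullet> a - s \<bullet> ?y = s \<bullet> (a - ?y)" by (simp add: inner_diff_right)
    also have "\<dots> = - ?t * c" unfolding ay c_def by simp
    finally have say: "s \<bullet> a - s \<bullet> ?y = - ?t * c" .
    have h1: "ff a - ff ?y \<le> - ?t * c" using m1 say by linarith
    have "?t * c \<le> ?t * ?D (x - a)" using g1 Day h1 by linarith
    then have h2: "c \<le> ?D (x - a)" using t[of k] by simp
    have main: "\<sigma> * r' * ?D w \<le> M - ff a - c" if sg: "\<sigma> = 1 \<or> \<sigma> = -1" and w: "w \<in> VV" "norm w \<le> 1" for \<sigma> w
    proof -
      obtain a1 b1 where ab: "w = a1 - b1" "a1 \<in> HH" "b1 \<in> HH" using w by auto
      define z where "z = x + (\<sigma> * r') *\<^sub>R w"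
      have zH: "z \<in> HH" unfolding z_def ab(1)
        by (rule mem_affine_3_minus[OF affine_affine_hull]) (use x I_S S_H ab in auto)
      have "norm (z - x) = r' * norm w" unfolding z_def using sg r' by auto
      also have "\<dots> \<le> r'" using w r' by (simp add: mult_left_le)
      finally have "z \<in> cball x r'" by (simp add: dist_norm norm_minus_commute)
      then have zK: "z \<in> cball x r' \<inter> HH" using zH by auto
      have zS: "z \<in> SS" using zK K I_S by auto
      have g2: "ff ?y + ?D (z - ?y) \<le> ff z" by (rule grad_ineq[OF xsI Ds zS])
      have zy: "z - ?y = (\<sigma> * r') *\<^sub>R w + (1 - ?t) *\<^sub>R (x - a)" unfolding z_def xs_def
        by (simp add: algebra_simps)
      have Dzy: "?D (z - ?y) = \<sigma> * r' * ?D w + (1 - ?t) * ?D (x - a)"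
        unfolding zy linear_add[OF lD] linear_scale[OF lD] by simp
      have "(1 - ?t) * c \<le> (1 - ?t) * ?D (x - a)" using h2 t[of k] by (intro mult_left_mono) auto
      moreover have "ff z \<le> M" using M zK by auto
      moreover have "(1 - ?t) * c = c - ?t * c" "(1 - ?t) * ?D (x - a) = ?D (x - a) - ?t * ?D (x - a)"
        by (simp_all add: algebra_simps)
      ultimately show ?thesis using g2 Dzy h1 by linarith
    qed
    show ?thesis unfolding dnorm_on_def
    proof (rule cSup_least)
      have "x - x \<in> VV" using x I_S S_H by blast
      then show "{\<bar>?D w\<bar> |w. w \<in> VV \<and> norm w \<le> 1} \<noteq> {}" by force
    next
      fix v assume "v \<in> {\<bar>?D w\<bar> |w. w \<in> VV \<and> norm w \<le> 1}"
      then obtain w where w: "v = \<bar>?D w\<bar>" "w \<in> VV" "norm w \<le> 1" by auto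
      have "r' * ?D w \<le> M - ff a - c" "- r' * ?D w \<le> M - ff a - c"
        using main[OF _ w(2,3), of 1] main[OF _ w(2,3), of "-1"] by auto
      then have "r' * \<bar>?D w\<bar> \<le> M - ff a - c" by (simp add: abs_if)
      then show "v \<le> B" unfolding B_def w(1) using r' by (simp add: field_simps)
    qed
  qed
  from \<open>filterlim _ at_top sequentially\<close> show False
  proof -
    assume "filterlim (\<lambda>k. dnorm_on VV (Ds k)) at_top sequentially"
    then have "eventually (\<lambda>k. B + 1 \<le> dnorm_on VV (Ds k)) sequentially"
      unfolding filterlim_at_top by blast
    then obtain N where "\<forall>n\<ge>N. B + 1 \<le> dnorm_on VV (Ds n)" unfolding eventually_sequentially by blast
    then have "B + 1 \<le> dnorm_on VV (Ds N)" by blast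
    with bnd[of N] show False by linarith
  qed
qed

lemma cont_on: "K \<subseteq> II \<Longrightarrow> continuous_on K ff"
  unfolding continuous_on_eq_continuous_within
proof
  fix z assume K: "K \<subseteq> II" and z: "z \<in> K"
  have "K \<subseteq> HH" using K I_S S_H by auto
  then show "continuous (at z within K) ff"
    using continuous_within_subset[OF cont_I[of z], of K] K z by blast
qed

lemma max_unique:
  assumes q1: "q1 \<in> SS" "\<forall>z\<in>SS. s \<bullet> z - ff z \<le> s \<bullet> q1 - ff q1"
    and q2: "q2 \<in> SS" "\<forall>z\<in>SS. s \<bullet> z - ff z \<le> s \<bullet> q2 - ff q2"
  shows "q1 = q2"
proof (rule ccontr)
  assume ne: "q1 \<noteq> q2"
  have I1: "q1 \<in> II" by (rule max_in_I[OF q1])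
  have I2: "q2 \<in> II" by (rule max_in_I[OF q2])
  define m where "m = (1/2) *\<^sub>R q1 + (1 - 1/2) *\<^sub>R q2"
  have mS: "m \<in> SS" unfolding m_def using convexD[OF simplex_convex q1(1) q2(1), of "1/2" "1 - 1/2"] by auto
  have st: "ff m < (1/2) * ff q1 + (1 - 1/2) * ff q2" unfolding m_def
    by (rule strict_ff[OF I1 I2 ne]) auto
  have sm: "s \<bullet> m = (1/2) * (s \<bullet> q1) + (1/2) * (s \<bullet> q2)" unfolding m_def by (simp add: inner_add_right)
  have "s \<bullet> q1 - ff q1 = s \<bullet> q2 - ff q2" using q1 q2 by (meson antisym)
  moreover have "s \<bullet> m - ff m \<le> s \<bullet> q1 - ff q1" using q1 mS by auto
  moreover have "ff m < (ff q1 + ff q2) / 2" using st by simp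
  ultimately show False using sm by (simp add: field_simps)
qed

lemma GG_deriv:
  assumes qS: "q \<in> SS" and mx: "\<forall>z\<in>SS. s \<bullet> z - ff z \<le> s \<bullet> q - ff q"
  shows "(GG has_derivative (\<lambda>v. q \<bullet> v)) (at s)"
  unfolding has_derivative_within_alt
proof (intro conjI allI impI)
  show "bounded_linear (\<lambda>v. q \<bullet> v)" by (rule bounded_linear_inner_right)
  fix e :: real assume e: "e > 0"
  have qI: "q \<in> II" by (rule max_in_I[OF qS mx])
  have Gs: "GG s = s \<bullet> q - ff q" by (rule GG_max[OF qS mx])
  obtain r where r: "r > 0" "ball q r \<inter> HH \<subseteq> SS" using qI unfolding int_within_def by auto
  define \<rho> where "\<rho> = min e (r / 2)"
  have rho: "0 < \<rho>" "\<rho> < r" "\<rho> \<le> e" using r e unfolding \<rho>_def by auto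
  define Sph where "Sph = sphere q \<rho> \<inter> HH"
  have SphI: "Sph \<subseteq> II" using cball_I[OF r(2) rho(1,2)] unfolding Sph_def by auto
  define \<phi> where "\<phi> = (\<lambda>z. GG s - s \<bullet> z + ff z)"
  have phi_nn: "\<phi> z \<ge> 0" if "z \<in> SS" for z using GG_ge[OF that, of s] unfolding \<phi>_def by simp
  have "\<exists>m>0. \<forall>z\<in>Sph. m \<le> \<phi> z"
  proof (cases "Sph = {}")
    case True then show ?thesis by (intro exI[of _ 1]) auto
  next
    case False
    have "compact Sph" unfolding Sph_def by (intro compact_Int_closed) auto
    moreover have "continuous_on Sph \<phi>" unfolding \<phi>_def
      by (intro continuous_intros cont_on[OF SphI])
    ultimately obtain z0 where z0: "z0 \<in> Sph" "\<forall>z\<in>Sph. \<phi> z0 \<le> \<phi> z"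
      using continuous_attains_inf[OF _ False] by blast
    have z0S: "z0 \<in> SS" using z0 SphI I_S by auto
    have "\<phi> z0 > 0"
    proof (rule ccontr)
      assume "\<not> \<phi> z0 > 0"
      then have "\<phi> z0 = 0" using phi_nn[OF z0S] by simp
      then have "s \<bullet> z0 - ff z0 = GG s" unfolding \<phi>_def by linarith
      then have "\<forall>z\<in>SS. s \<bullet> z - ff z \<le> s \<bullet> z0 - ff z0"
        using GG_ge[of _ s] by auto
      then have "z0 = q" using max_unique[OF z0S _ qS mx] by blast
      then show False using z0(1) rho unfolding Sph_def by auto
    qed
    then show ?thesis using z0 by blast
  qed
  then obtain m where m: "m > 0" "\<forall>z\<in>Sph. m \<le> \<phi> z" by blast
  have far: "m \<le> \<phi> p" if pS: "p \<in> SS" and pf: "\<rho> \<le> norm (p - q)" for p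
  proof -
    define l where "l = \<rho> / norm (p - q)"
    have np: "norm (p - q) > 0" using pf rho by linarith
    have l: "0 < l" "l \<le> 1" unfolding l_def using np rho pf by (auto simp: field_simps)
    define z where "z = (1 - l) *\<^sub>R q + l *\<^sub>R p"
    have zS: "z \<in> SS" unfolding z_def using convexD[OF simplex_convex qS pS, of "1-l" l] l by auto
    have "z - q = l *\<^sub>R (p - q)" unfolding z_def by (simp add: algebra_simps)
    then have "norm (z - q) = \<rho>" unfolding l_def using np rho by simp
    then have "z \<in> Sph" unfolding Sph_def using zS S_H by (auto simp: dist_norm norm_minus_commute)
    then have A: "m \<le> \<phi> z" using m by auto
    have cv: "ff z \<le> (1 - l) * ff q + l * ff p"
      unfolding z_def using convex_onD[OF convex_ff, of l q p] l qS pS by simp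
    have sz: "s \<bullet> z = (1 - l) * (s \<bullet> q) + l * (s \<bullet> p)" unfolding z_def by (simp add: inner_add_right)
    have "\<phi> z \<le> l * \<phi> p"
    proof -
      have "\<phi> z \<le> GG s - ((1 - l) * (s \<bullet> q) + l * (s \<bullet> p)) + ((1 - l) * ff q + l * ff p)"
        unfolding \<phi>_def sz using cv by linarith
      also have "\<dots> = l * \<phi> p" unfolding \<phi>_def Gs by (simp add: algebra_simps)
      finally show ?thesis .
    qed
    also have "\<dots> \<le> \<phi> p" using l phi_nn[OF pS] by (simp add: mult_left_le_one_le)
    finally show ?thesis using A by linarith
  qed
  define d where "d = m / 2"
  have d: "d > 0" using m unfolding d_def by simp
  show "\<exists>d>0. \<forall>y\<in>UNIV. norm (y - s) < d \<longrightarrow> norm (GG y - GG s - q \<bullet> (y - s)) \<le> e * norm (y - s)"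
  proof (intro exI[of _ d] conjI ballI impI d)
    fix y assume yd: "norm (y - s) < d"
    define v where "v = y - s"
    obtain qv where qv: "qv \<in> SS" "\<forall>z\<in>SS. y \<bullet> z - ff z \<le> y \<bullet> qv - ff qv" using max_exists[of y] by blast
    have Gy: "GG y = y \<bullet> qv - ff qv" by (rule GG_max[OF qv])
    define E where "E = GG y - GG s - q \<bullet> v"
    have "y \<bullet> q - ff q \<le> GG y" by (rule GG_ge[OF qS])
    moreover have "y \<bullet> q = s \<bullet> q + q \<bullet> v" unfolding v_def by (simp add: inner_diff_right inner_commute)
    ultimately have E0: "E \<ge> 0" unfolding E_def Gs by linarith
    have yqv: "y \<bullet> qv = s \<bullet> qv + v \<bullet> qv" unfolding v_def by (simp add: inner_diff_left)
    have Eeq: "E = v \<bullet> (qv - q) - \<phi> qv" unfolding E_def \<phi>_def Gy yqv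
      by (simp add: inner_diff_right inner_commute)
    have cs: "v \<bullet> (qv - q) \<le> norm v * norm (qv - q)" by (rule norm_cauchy_schwarz)
    have "E \<le> e * norm v"
    proof (cases "norm (qv - q) < \<rho>")
      case True
      have "norm v * norm (qv - q) \<le> norm v * \<rho>" using True by (intro mult_left_mono) auto
      also have "\<dots> \<le> norm v * e" using rho by (intro mult_left_mono) auto
      finally show ?thesis using Eeq cs phi_nn[OF qv(1)] by (simp add: mult.commute)
    next
      case False
      have "m \<le> \<phi> qv" using far[OF qv(1)] False by simp
      have "norm (qv - q) \<le> norm qv + norm q" by (rule norm_triangle_ineq4)
      also have "\<dots> \<le> 2" using simplex_norm[OF qv(1)] simplex_norm[OF qS] by simp
      finally have "norm v * norm (qv - q) \<le> norm v * 2" by (intro mult_left_mono) auto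
      moreover have "norm v < d" using yd unfolding v_def .
      ultimately have "E < 0" using Eeq cs \<open>m \<le> \<phi> qv\<close> unfolding d_def by linarith
      then show ?thesis using e by (smt (verit) norm_ge_zero zero_le_mult_iff)
    qed
    then show "norm (GG y - GG s - q \<bullet> (y - s)) \<le> e * norm (y - s)"
      using E0 unfolding E_def v_def by simp
  qed
qed

end

lemma tdot: "(transpose Y *v \<theta>) \<bullet> q = \<theta> \<bullet> ((Y :: real^'y::finite^'d::finite) *v q)"
  by (simp add: dot_lmul_matrix)

lemma Yq_hull:
  assumes "q \<in> prob_simplex"
  shows "(Y :: real^'y::finite^'d::finite) *v q \<in> convex hull (columns Y)"
proof -
  have "Y *v q = (\<Sum>i\<in>UNIV. q$i *\<^sub>R column i Y)" by (simp add: matrix_mult_sum scalar_mult_eq_scaleR)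
  also have "\<dots> \<in> convex hull (columns Y)"
    by (rule convex_sum) (use assms in \<open>auto simp: prob_simplex_def columns_def intro!: hull_inc\<close>)
  finally show ?thesis .
qed

context omega_setting
begin

lemma GG_ge0: "z \<in> SS \<Longrightarrow> - GG 0 \<le> ff z"
  using GG_ge[of z 0] by simp

lemma OC_props:
  fixes Y :: "real^'y^'d::finite"
  assumes q: "q \<in> SS"
  shows "omega_C Y \<Omega> (Y *v q) = ereal (real_of_ereal (omega_C Y \<Omega> (Y *v q)))"
    and "real_of_ereal (omega_C Y \<Omega> (Y *v q)) \<le> ff q"
    and "real_of_ereal (omega_C Y \<Omega> (Y *v q)) = ff q \<longleftrightarrow>
          (\<forall>q'\<in>SS. Y *v q' = Y *v q \<longrightarrow> \<Omega> q \<le> \<Omega> q')"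
    and "\<Omega> q = ereal (ff q)"
proof -
  let ?T = "{q' \<in> SS. Y *v q' = Y *v q}"
  have OC: "omega_C Y \<Omega> (Y *v q) = (INF q'\<in>?T. \<Omega> q')"
    unfolding omega_C_def using Yq_hull[OF q] by auto
  have qT: "q \<in> ?T" using q by auto
  have up: "(INF q'\<in>?T. \<Omega> q') \<le> ereal (ff q)" using INF_lower[OF qT, of \<Omega>] Om_in[OF q] by simp
  have lo: "ereal (- GG 0) \<le> (INF q'\<in>?T. \<Omega> q')"
  proof (rule INF_greatest)
    fix q' assume "q' \<in> ?T"
    then have "q' \<in> SS" by auto
    then show "ereal (- GG 0) \<le> \<Omega> q'" using GG_ge0[of q'] Om_ex[of q'] by auto
  qed
  obtain c where c: "(INF q'\<in>?T. \<Omega> q') = ereal c" using up lo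
    by (cases "(INF q'\<in>?T. \<Omega> q')") auto
  show "omega_C Y \<Omega> (Y *v q) = ereal (real_of_ereal (omega_C Y \<Omega> (Y *v q)))" using OC c by simp
  show "real_of_ereal (omega_C Y \<Omega> (Y *v q)) \<le> ff q" using OC c up by simp
  show "\<Omega> q = ereal (ff q)" by (rule Om_in[OF q])
  have "real_of_ereal (omega_C Y \<Omega> (Y *v q)) = ff q \<longleftrightarrow> \<Omega> q \<le> (INF q'\<in>?T. \<Omega> q')"
    using OC c up Om_in[OF q] by auto
  also have "\<dots> \<longleftrightarrow> (\<forall>q'\<in>SS. Y *v q' = Y *v q \<longrightarrow> \<Omega> q \<le> \<Omega> q')"
    by (auto simp: le_INF_iff)
  finally show "real_of_ereal (omega_C Y \<Omega> (Y *v q)) = ff q \<longleftrightarrow>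
          (\<forall>q'\<in>SS. Y *v q' = Y *v q \<longrightarrow> \<Omega> q \<le> \<Omega> q')" .
qed

lemma fconjC:
  fixes Y :: "real^'y^'d::finite"
  shows "fconj (omega_C Y \<Omega>) \<theta> = fconj \<Omega> (transpose Y *v \<theta>)"
proof (rule antisym)
  let ?s = "transpose Y *v \<theta>"
  show "fconj (omega_C Y \<Omega>) \<theta> \<le> fconj \<Omega> ?s"
    unfolding fconj_fin[of ?s] unfolding fconj_def
  proof (rule SUP_least)
    fix \<mu>
    show "ereal (\<theta> \<bullet> \<mu>) - omega_C Y \<Omega> \<mu> \<le> ereal (GG ?s)"
    proof (cases "\<mu> \<in> convex hull (columns Y)")
      case False then show ?thesis unfolding omega_C_def by simp
    next
      case True
      let ?T = "{q' \<in> SS. Y *v q' = \<mu>}"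
      have "ereal (\<theta> \<bullet> \<mu> - GG ?s) \<le> (INF q'\<in>?T. \<Omega> q')"
      proof (rule INF_greatest)
        fix q' assume q': "q' \<in> ?T"
        then have "?s \<bullet> q' - ff q' \<le> GG ?s" using GG_ge by auto
        moreover obtain a where "\<Omega> q' = ereal a" using Om_ex[of q'] q' by auto
        ultimately show "ereal (\<theta> \<bullet> \<mu> - GG ?s) \<le> \<Omega> q'" using q' tdot[of Y \<theta> q'] by auto
      qed
      then have "ereal (\<theta> \<bullet> \<mu> - GG ?s) \<le> omega_C Y \<Omega> \<mu>" unfolding omega_C_def using True by simp
      then show ?thesis by (cases "omega_C Y \<Omega> \<mu>") auto
    qed
  qed
  obtain q where q: "q \<in> SS" "\<forall>z\<in>SS. ?s \<bullet> z - ff z \<le> ?s \<bullet> q - ff q" using max_exists by blast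
  have "fconj \<Omega> ?s = ereal (?s \<bullet> q - ff q)" by (rule fconj_max[OF q])
  also have "\<dots> \<le> ereal (\<theta> \<bullet> (Y *v q)) - omega_C Y \<Omega> (Y *v q)"
    using OC_props(1,2)[OF q(1), of Y] tdot[of Y \<theta> q]
    by (metis diff_left_mono ereal_minus(1) ereal_less_eq(3))
  also have "\<dots> \<le> fconj (omega_C Y \<Omega>) \<theta>" unfolding fconj_def by (rule SUP_upper) simp
  finally show "fconj \<Omega> ?s \<le> fconj (omega_C Y \<Omega>) \<theta>" .
qed

end

theorem proposition6:
  fixes Y :: "real ^ 'y::finite ^ 'd::finite"
    and \<Omega> :: "real ^ 'y \<Rightarrow> ereal"
  defines "\<Y> \<equiv> columns Y"
    and "V \<equiv> {a - b | a b. a \<in> affine hull columns Y \<and> b \<in> affine hull columns Y}"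
    and "\<Omega>C \<equiv> omega_C Y \<Omega>"
  assumes inj_cols: "inj (\<lambda>j. column j Y)"
    and extreme: "\<forall>y\<in>\<Y>. y \<notin> convex hull (\<Y> - {y})"
    and proper: "proper_fun \<Omega>"
    and lsc: "lsc_fun \<Omega>"
    and cvx: "convex_fun \<Omega>"
    and dom: "edom \<Omega> = prob_simplex"
    and leg: "legendre_on (affine hull prob_simplex) \<Omega>"
  shows
    "(\<forall>\<theta> q. q \<in> prob_simplex \<longrightarrow> (transpose Y *v \<theta>) \<bullet> q = \<theta> \<bullet> (Y *v q))
   \<and> (\<forall>\<theta>. fconj \<Omega>C \<theta> = fconj \<Omega> (transpose Y *v \<theta>))
   \<and> edom (fconj \<Omega>C) = UNIV
   \<and> (\<forall>\<theta>. (\<lambda>t. real_of_ereal (fconj \<Omega>C t)) differentiable (at \<theta>))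
   \<and> (\<forall>x\<in>{w. \<forall>v\<in>V. w \<bullet> v = 0}. \<forall>z\<in>{w. \<forall>v\<in>V. w \<bullet> v = 0}. \<forall>t::real.
        fconj \<Omega>C ((1 - t) *\<^sub>R x + t *\<^sub>R z)
          = ereal (1 - t) * fconj \<Omega>C x + ereal t * fconj \<Omega>C z)
   \<and> (\<forall>\<theta> q. q \<in> prob_simplex \<longrightarrow>
        \<Omega> q \<ge> \<Omega>C (Y *v q)
      \<and> fy_loss \<Omega> (transpose Y *v \<theta>) q \<ge> fy_loss \<Omega>C \<theta> (Y *v q)
      \<and> (\<Omega> q = \<Omega>C (Y *v q) \<longleftrightarrow>
           (\<forall>q'\<in>prob_simplex. Y *v q' = Y *v q \<longrightarrow> \<Omega> q \<le> \<Omega> q'))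
      \<and> (fy_loss \<Omega> (transpose Y *v \<theta>) q = fy_loss \<Omega>C \<theta> (Y *v q) \<longleftrightarrow>
           (\<forall>q'\<in>prob_simplex. Y *v q' = Y *v q \<longrightarrow> \<Omega> q \<le> \<Omega> q')))
   \<and> (\<forall>q. q \<in> prob_simplex \<longrightarrow>
        (INF \<theta>'. fy_loss \<Omega> (transpose Y *v \<theta>') q) \<ge> (INF \<theta>'. fy_loss \<Omega>C \<theta>' (Y *v q))
      \<and> ((INF \<theta>'. fy_loss \<Omega> (transpose Y *v \<theta>') q) = (INF \<theta>'. fy_loss \<Omega>C \<theta>' (Y *v q)) \<longleftrightarrow>
           (\<forall>q'\<in>prob_simplex. Y *v q' = Y *v q \<longrightarrow> \<Omega> q \<le> \<Omega> q')))
   \<and> (\<forall>\<theta> q. q \<in> prob_simplex \<longrightarrow>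
        (\<exists>g. ((\<lambda>s. real_of_ereal (fconj \<Omega> s)) has_derivative (\<lambda>v. g \<bullet> v)) (at (transpose Y *v \<theta>))
          \<and> ((\<lambda>t. real_of_ereal (fy_loss \<Omega> (transpose Y *v t) q))
               has_derivative (\<lambda>v. (Y *v (g - q)) \<bullet> v)) (at \<theta>)
          \<and> ((\<lambda>t. real_of_ereal (fy_loss \<Omega>C t (Y *v q)))
               has_derivative (\<lambda>v. (Y *v (g - q)) \<bullet> v)) (at \<theta>)
          \<and> ((\<lambda>t. real_of_ereal (fconj \<Omega>C t)) has_derivative (\<lambda>v. (Y *v g) \<bullet> v)) (at \<theta>)))"
proof -
  interpret omega_setting \<Omega> using proper lsc cvx dom leg by unfold_locales
  have FC: "\<And>\<theta>. fconj \<Omega>C \<theta> = fconj \<Omega> (transpose Y *v \<theta>)" unfolding \<Omega>C_def by (rule fconjC)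
  have FCfin: "\<And>\<theta>. fconj \<Omega>C \<theta> = ereal (GG (transpose Y *v \<theta>))" using FC fconj_fin by simp
  have FCreal: "(\<lambda>t. real_of_ereal (fconj \<Omega>C t)) = (\<lambda>t. GG (transpose Y *v t))"
    using FCfin by simp
  have GGfun: "(\<lambda>s. real_of_ereal (fconj \<Omega> s)) = GG" by (rule ext) (simp add: GG_def)
  have Gd: "\<exists>g. g \<in> SS \<and> (GG has_derivative (\<lambda>v. g \<bullet> v)) (at (transpose Y *v \<theta>))
      \<and> ((\<lambda>t. GG (transpose Y *v t)) has_derivative (\<lambda>v. (Y *v g) \<bullet> v)) (at \<theta>)" for \<theta>
  proof -
    obtain g where g: "g \<in> SS" "\<forall>z\<in>SS. (transpose Y *v \<theta>) \<bullet> z - ff z \<le> (transpose Y *v \<theta>) \<bullet> g - ff g"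
      using max_exists by blast
    have d1: "(GG has_derivative (\<lambda>v. g \<bullet> v)) (at (transpose Y *v \<theta>))" by (rule GG_deriv[OF g])
    have "((\<lambda>t. GG (transpose Y *v t)) has_derivative (\<lambda>v. g \<bullet> (transpose Y *v v))) (at \<theta>)"
      by (rule has_derivative_compose[OF bounded_linear_imp_has_derivative[OF matrix_vector_mul_bounded_linear] d1])
    moreover have "(\<lambda>v. g \<bullet> (transpose Y *v v)) = (\<lambda>v. (Y *v g) \<bullet> v)"
      by (rule ext) (metis inner_commute tdot)
    ultimately show ?thesis using g d1 by auto
  qed
  have P1: "\<forall>\<theta> q. q \<in> prob_simplex \<longrightarrow> (transpose Y *v \<theta>) \<bullet> q = \<theta> \<bullet> (Y *v q)"
    using tdot by blast
  have P3: "edom (fconj \<Omega>C) = UNIV" unfolding edom_def using FCfin by simp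
  have P4: "\<forall>\<theta>. (\<lambda>t. real_of_ereal (fconj \<Omega>C t)) differentiable (at \<theta>)"
    unfolding FCreal differentiable_def using Gd by blast
  have P5: "\<forall>x\<in>{w. \<forall>v\<in>V. w \<bullet> v = 0}. \<forall>z\<in>{w. \<forall>v\<in>V. w \<bullet> v = 0}. \<forall>t::real.
        fconj \<Omega>C ((1 - t) *\<^sub>R x + t *\<^sub>R z)
          = ereal (1 - t) * fconj \<Omega>C x + ereal t * fconj \<Omega>C z"
  proof -
    obtain j0 :: 'y where True by auto
    define c0 where "c0 = column j0 Y"
    have c0A: "c0 \<in> affine hull columns Y" unfolding c0_def by (rule hull_inc) (auto simp: columns_def)
    have key: "GG (transpose Y *v \<theta>) = \<theta> \<bullet> c0 + GG 0" if th: "\<forall>v\<in>V. \<theta> \<bullet> v = 0" for \<theta>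
    proof -
      let ?s = "transpose Y *v \<theta>"
      have sz: "?s \<bullet> z = \<theta> \<bullet> c0" if z: "z \<in> SS" for z
      proof -
        have "Y *v z \<in> affine hull columns Y"
          using Yq_hull[OF z, of Y] convex_hull_subset_affine_hull by blast
        then have "Y *v z - c0 \<in> V" unfolding V_def using c0A by blast
        then have "\<theta> \<bullet> (Y *v z - c0) = 0" using th by blast
        then show ?thesis using tdot[of Y \<theta> z] by (simp add: inner_diff_right)
      qed
      obtain q where q: "q \<in> SS" "\<forall>z\<in>SS. ?s \<bullet> z - ff z \<le> ?s \<bullet> q - ff q"
        using max_exists by blast
      have "GG ?s = ?s \<bullet> q - ff q" by (rule GG_max[OF q])
      moreover have "\<forall>z\<in>SS. 0 \<bullet> z - ff z \<le> 0 \<bullet> q - ff q" using q sz by force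
      then have "GG 0 = 0 \<bullet> q - ff q" using GG_max[OF q(1)] by blast
      ultimately show ?thesis using sz[OF q(1)] by simp
    qed
    show ?thesis
    proof (intro ballI allI)
      fix x z t assume x: "x \<in> {w. \<forall>v\<in>V. w \<bullet> v = 0}" and z: "z \<in> {w. \<forall>v\<in>V. w \<bullet> v = 0}"
      have w: "\<forall>v\<in>V. ((1 - t) *\<^sub>R x + t *\<^sub>R z) \<bullet> v = 0" using x z by (simp add: inner_add_left)
      show "fconj \<Omega>C ((1 - t) *\<^sub>R x + t *\<^sub>R z) = ereal (1 - t) * fconj \<Omega>C x + ereal t * fconj \<Omega>C z"
        unfolding FCfin key[OF w] using key x z by (simp add: inner_add_left algebra_simps)
    qed
  qed
  have loc: "\<exists>a c. \<Omega> q = ereal a \<and> \<Omega>C (Y *v q) = ereal c \<and> c \<le> a \<and>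
      (c = a \<longleftrightarrow> (\<forall>q'\<in>prob_simplex. Y *v q' = Y *v q \<longrightarrow> \<Omega> q \<le> \<Omega> q'))" if q: "q \<in> prob_simplex" for q
  proof -
    obtain a where a: "\<Omega> q = ereal a" using Om_ex[OF q] by blast
    define c where "c = real_of_ereal (\<Omega>C (Y *v q))"
    have c: "\<Omega>C (Y *v q) = ereal c" unfolding c_def \<Omega>C_def by (rule OC_props(1)[OF q])
    have "c \<le> a" using OC_props(2)[OF q, of Y] a unfolding c_def \<Omega>C_def by simp
    moreover have "c = a \<longleftrightarrow> (\<forall>q'\<in>prob_simplex. Y *v q' = Y *v q \<longrightarrow> \<Omega> q \<le> \<Omega> q')"
      using OC_props(3)[OF q, of Y] a unfolding c_def \<Omega>C_def by simp
    ultimately show ?thesis using a c by blast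
  qed
  have fy1: "fy_loss \<Omega> (transpose Y *v t) q = ereal (a + GG (transpose Y *v t) - t \<bullet> (Y *v q))"
    if "\<Omega> q = ereal a" for t q a
    unfolding fy_loss_def fconj_fin tdot that by simp
  have fy2: "fy_loss \<Omega>C t (Y *v q) = ereal (c + GG (transpose Y *v t) - t \<bullet> (Y *v q))"
    if "\<Omega>C (Y *v q) = ereal c" for t q c
    unfolding fy_loss_def FCfin that by simp
  have P6: "\<forall>\<theta> q. q \<in> prob_simplex \<longrightarrow>
        \<Omega> q \<ge> \<Omega>C (Y *v q)
      \<and> fy_loss \<Omega> (transpose Y *v \<theta>) q \<ge> fy_loss \<Omega>C \<theta> (Y *v q)
      \<and> (\<Omega> q = \<Omega>C (Y *v q) \<longleftrightarrow>
           (\<forall>q'\<in>prob_simplex. Y *v q' = Y *v q \<longrightarrow> \<Omega> q \<le> \<Omega> q'))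
      \<and> (fy_loss \<Omega> (transpose Y *v \<theta>) q = fy_loss \<Omega>C \<theta> (Y *v q) \<longleftrightarrow>
           (\<forall>q'\<in>prob_simplex. Y *v q' = Y *v q \<longrightarrow> \<Omega> q \<le> \<Omega> q'))"
  proof (intro allI impI)
    fix \<theta> :: "real^'d" and q :: "real^'y" assume q: "q \<in> prob_simplex"
    obtain a c where ac: "\<Omega> q = ereal a" "\<Omega>C (Y *v q) = ereal c" "c \<le> a"
      "c = a \<longleftrightarrow> (\<forall>q'\<in>prob_simplex. Y *v q' = Y *v q \<longrightarrow> \<Omega> q \<le> \<Omega> q')"
      using loc[OF q] by blast
    show "\<Omega> q \<ge> \<Omega>C (Y *v q)
      \<and> fy_loss \<Omega> (transpose Y *v \<theta>) q \<ge> fy_loss \<Omega>C \<theta> (Y *v q)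
      \<and> (\<Omega> q = \<Omega>C (Y *v q) \<longleftrightarrow>
           (\<forall>q'\<in>prob_simplex. Y *v q' = Y *v q \<longrightarrow> \<Omega> q \<le> \<Omega> q'))
      \<and> (fy_loss \<Omega> (transpose Y *v \<theta>) q = fy_loss \<Omega>C \<theta> (Y *v q) \<longleftrightarrow>
           (\<forall>q'\<in>prob_simplex. Y *v q' = Y *v q \<longrightarrow> \<Omega> q \<le> \<Omega> q'))"
    proof -
      define P where "P = (\<forall>q'\<in>prob_simplex. Y *v q' = Y *v q \<longrightarrow> \<Omega> q \<le> \<Omega> q')"
      have P: "c = a \<longleftrightarrow> P" using ac(4) unfolding P_def .
      show ?thesis unfolding P_def[symmetric]
        unfolding fy1[OF ac(1)] fy2[OF ac(2)] ac(1,2) using ac(3) P by auto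
    qed
  qed
  have P7: "\<forall>q. q \<in> prob_simplex \<longrightarrow>
        (INF \<theta>'. fy_loss \<Omega> (transpose Y *v \<theta>') q) \<ge> (INF \<theta>'. fy_loss \<Omega>C \<theta>' (Y *v q))
      \<and> ((INF \<theta>'. fy_loss \<Omega> (transpose Y *v \<theta>') q) = (INF \<theta>'. fy_loss \<Omega>C \<theta>' (Y *v q)) \<longleftrightarrow>
           (\<forall>q'\<in>prob_simplex. Y *v q' = Y *v q \<longrightarrow> \<Omega> q \<le> \<Omega> q'))"
  proof (intro allI impI)
    fix q :: "real^'y" assume q: "q \<in> prob_simplex"
    obtain a c where ac: "\<Omega> q = ereal a" "\<Omega>C (Y *v q) = ereal c" "c \<le> a"
      "c = a \<longleftrightarrow> (\<forall>q'\<in>prob_simplex. Y *v q' = Y *v q \<longrightarrow> \<Omega> q \<le> \<Omega> q')"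
      using loc[OF q] by blast
    define L where "L = (\<lambda>t. c + GG (transpose Y *v t) - t \<bullet> (Y *v q))"
    have Lnn: "0 \<le> L t" for t
    proof -
      have "ereal (t \<bullet> (Y *v q)) - \<Omega>C (Y *v q) \<le> fconj \<Omega>C t" unfolding fconj_def by (rule SUP_upper) simp
      then show ?thesis unfolding L_def FCfin ac(2) by simp
    qed
    have e1: "fy_loss \<Omega> (transpose Y *v t) q = ereal (L t) + ereal (a - c)" for t
      unfolding fy1[OF ac(1)] L_def by simp
    have e2: "fy_loss \<Omega>C t (Y *v q) = ereal (L t)" for t
      unfolding fy2[OF ac(2)] L_def by simp
    have I1: "(INF t. ereal (L t) + ereal (a - c)) = (INF t. ereal (L t)) + ereal (a - c)"
      by (rule INF_ereal_add_left) (auto simp: Lnn)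
    have lo: "0 \<le> (INF t. ereal (L t))" by (rule INF_greatest) (simp add: Lnn)
    have up: "(INF t. ereal (L t)) \<le> ereal (L 0)" by (rule INF_lower) simp
    obtain l where l: "(INF t. ereal (L t)) = ereal l" using lo up by (cases "(INF t. ereal (L t))") auto
    show "(INF \<theta>'. fy_loss \<Omega> (transpose Y *v \<theta>') q) \<ge> (INF \<theta>'. fy_loss \<Omega>C \<theta>' (Y *v q))
      \<and> ((INF \<theta>'. fy_loss \<Omega> (transpose Y *v \<theta>') q) = (INF \<theta>'. fy_loss \<Omega>C \<theta>' (Y *v q)) \<longleftrightarrow>
           (\<forall>q'\<in>prob_simplex. Y *v q' = Y *v q \<longrightarrow> \<Omega> q \<le> \<Omega> q'))"
    proof -
      define P where "P = (\<forall>q'\<in>prob_simplex. Y *v q' = Y *v q \<longrightarrow> \<Omega> q \<le> \<Omega> q')"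
      have P: "c = a \<longleftrightarrow> P" using ac(4) unfolding P_def .
      show ?thesis unfolding P_def[symmetric]
        unfolding e1 e2 I1 l using ac(3) P by auto
    qed
  qed
  have P8: "\<forall>\<theta> q. q \<in> prob_simplex \<longrightarrow>
        (\<exists>g. ((\<lambda>s. real_of_ereal (fconj \<Omega> s)) has_derivative (\<lambda>v. g \<bullet> v)) (at (transpose Y *v \<theta>))
          \<and> ((\<lambda>t. real_of_ereal (fy_loss \<Omega> (transpose Y *v t) q))
               has_derivative (\<lambda>v. (Y *v (g - q)) \<bullet> v)) (at \<theta>)
          \<and> ((\<lambda>t. real_of_ereal (fy_loss \<Omega>C t (Y *v q)))
               has_derivative (\<lambda>v. (Y *v (g - q)) \<bullet> v)) (at \<theta>)
          \<and> ((\<lambda>t. real_of_ereal (fconj \<Omega>C t)) has_derivative (\<lambda>v. (Y *v g) \<bullet> v)) (at \<theta>))"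
  proof (intro allI impI)
    fix \<theta> :: "real^'d" and q :: "real^'y" assume q: "q \<in> prob_simplex"
    obtain a c where ac: "\<Omega> q = ereal a" "\<Omega>C (Y *v q) = ereal c"
      using loc[OF q] by blast
    obtain g where g: "(GG has_derivative (\<lambda>v. g \<bullet> v)) (at (transpose Y *v \<theta>))"
      "((\<lambda>t. GG (transpose Y *v t)) has_derivative (\<lambda>v. (Y *v g) \<bullet> v)) (at \<theta>)"
      using Gd[of \<theta>] by blast
    have lin: "((\<lambda>t. t \<bullet> (Y *v q)) has_derivative (\<lambda>v. v \<bullet> (Y *v q))) (at \<theta>)"
      by (rule bounded_linear_imp_has_derivative[OF bounded_linear_inner_left])
    have rhs: "(\<lambda>v. 0 + (Y *v g) \<bullet> v - v \<bullet> (Y *v q)) = (\<lambda>v. (Y *v (g - q)) \<bullet> v)"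
      by (rule ext) (simp add: matrix_vector_mult_diff_distrib inner_diff_left inner_diff_right inner_commute)
    have D1: "((\<lambda>t. a + GG (transpose Y *v t) - t \<bullet> (Y *v q)) has_derivative (\<lambda>v. (Y *v (g - q)) \<bullet> v)) (at \<theta>)"
      by (rule has_derivative_eq_rhs[OF has_derivative_diff[OF has_derivative_add[OF has_derivative_const g(2)] lin] rhs])
    have D2: "((\<lambda>t. c + GG (transpose Y *v t) - t \<bullet> (Y *v q)) has_derivative (\<lambda>v. (Y *v (g - q)) \<bullet> v)) (at \<theta>)"
      by (rule has_derivative_eq_rhs[OF has_derivative_diff[OF has_derivative_add[OF has_derivative_const g(2)] lin] rhs])
    show "\<exists>g. ((\<lambda>s. real_of_ereal (fconj \<Omega> s)) has_derivative (\<lambda>v. g \<bullet> v)) (at (transpose Y *v \<theta>))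
          \<and> ((\<lambda>t. real_of_ereal (fy_loss \<Omega> (transpose Y *v t) q))
               has_derivative (\<lambda>v. (Y *v (g - q)) \<bullet> v)) (at \<theta>)
          \<and> ((\<lambda>t. real_of_ereal (fy_loss \<Omega>C t (Y *v q)))
               has_derivative (\<lambda>v. (Y *v (g - q)) \<bullet> v)) (at \<theta>)
          \<and> ((\<lambda>t. real_of_ereal (fconj \<Omega>C t)) has_derivative (\<lambda>v. (Y *v g) \<bullet> v)) (at \<theta>)"
      unfolding GGfun fy1[OF ac(1)] fy2[OF ac(2)] FCreal using g D1 D2 by auto
  qed
  show ?thesis using P1 FC P3 P4 P5 P6 P7 P8 by blast
qed

end
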